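(* Let $\mathbb G$ be the projective Fraïssé limit of the class $\mathcal G$ of finite connected graphs with confluent epimorphisms. Then the edge relation $E(\mathbb G)$ is transitive.
   Context: A graph is a pair $A=(V(A),E(A))$ with $E(A)\subseteq V(A)^2$ reflexive and symmetric. A topological graph is a graph whose vertex set is a compact, second countable, zero-dimensional (metrizable) space and whose edge set is closed in $V^2$. A homomorphism maps edges to edges; an epimorphism is a homomorphism surjective on vertices and on edges (continuous, when the domain is a topological graph). A subset $S\subseteq V(A)$ of a (topological) graph is disconnected if there are nonempty closed subsets $P,Q$ of $S$ with $P\cup Q=S$ and no edge $\langle a,b\rangle$ with $a\in P$, $b\in Q$; otherwise connected. Components are maximal connected subsets. An epimorphism $f\colon A\to B$ is confluent if for every connected $Q\subseteq V(B)$ and every component $C$ of $f^{-1}(Q)$, $f(C)=Q$. $\mathcal G$ is the class of finite connected graphs with confluent epimorphisms; it is a projective Fraïssé class. Its projective Fraïssé limit $\mathbb G$ is the unique (up to isomorphism) topological graph such that: (1) for each $A\in\mathcal G$ there is a confluent epimorphism $\mathbb G\to A$; (2) for $A,B\in\mathcal G$ and confluent epimorphisms $f\colon\mathbb G\to A$, $g\colon B\to A$ there is a confluent epimorphism $h\colon\mathbb G\to B$ with $f=g\circ h$; (3) for every $\varepsilon>0$ (with respect to a fixed compatible metric) there are $A\in\mathcal G$ and a confluent epimorphism $f\colon\mathbb G\to A$ all of whose point-preimages have diameter $<\varepsilon$. *)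

theory Defs
  imports "HOL-Analysis.Analysis"
begin

definition is_graph :: "'a set \<Rightarrow> ('a \<times> 'a) set \<Rightarrow> bool" where
  "is_graph V E \<longleftrightarrow> E \<subseteq> V \<times> V \<and> (\<forall>x\<in>V. (x, x) \<in> E) \<and> (\<forall>x y. (x, y) \<in> E \<longrightarrow> (y, x) \<in> E)"

text \<open>Graph-connectedness of a subset S (closed sets taken in the subspace topology of S).
  For finite graphs on nat the topology is discrete, so every subset is closed.\<close>
definition graph_connected :: "('a::topological_space \<times> 'a) set \<Rightarrow> 'a set \<Rightarrow> bool" where
  "graph_connected E S \<longleftrightarrow>
     \<not> (\<exists>P Q. P \<noteq> {} \<and> Q \<noteq> {} \<and> closedin (top_of_set S) P \<and> closedin (top_of_set S) Q
          \<and> P \<union> Q = S \<and> (\<forall>a\<in>P. \<forall>b\<in>Q. (a, b) \<notin> E))"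

definition graph_component :: "('a::topological_space \<times> 'a) set \<Rightarrow> 'a set \<Rightarrow> 'a set \<Rightarrow> bool" where
  "graph_component E X C \<longleftrightarrow> C \<subseteq> X \<and> graph_connected E C \<and>
     (\<forall>D. C \<subseteq> D \<and> D \<subseteq> X \<and> graph_connected E D \<longrightarrow> D = C)"

definition graph_epi ::
  "'a::topological_space set \<Rightarrow> ('a \<times> 'a) set \<Rightarrow> 'b::topological_space set \<Rightarrow> ('b \<times> 'b) set \<Rightarrow> ('a \<Rightarrow> 'b) \<Rightarrow> bool" where
  "graph_epi V E W F f \<longleftrightarrow> continuous_on V f \<and> f ` V = W \<and> (\<lambda>(a, b). (f a, f b)) ` E = F"

definition confluent_epi ::
  "'a::topological_space set \<Rightarrow> ('a \<times> 'a) set \<Rightarrow> 'b::topological_space set \<Rightarrow> ('b \<times> 'b) set \<Rightarrow> ('a \<Rightarrow> 'b) \<Rightarrow> bool" where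
  "confluent_epi V E W F f \<longleftrightarrow> graph_epi V E W F f \<and>
     (\<forall>Q. Q \<subseteq> W \<and> graph_connected F Q \<longrightarrow>
        (\<forall>C. graph_component E (V \<inter> f -` Q) C \<longrightarrow> f ` C = Q))"

text \<open>Objects of the class G: nonempty finite connected graphs (vertices taken in nat,
  which carries the discrete topology; every finite graph is isomorphic to one of these).\<close>
definition fin_conn_graph :: "nat set \<Rightarrow> (nat \<times> nat) set \<Rightarrow> bool" where
  "fin_conn_graph V E \<longleftrightarrow> is_graph V E \<and> finite V \<and> V \<noteq> {} \<and> graph_connected E V"

text \<open>Topological graph: compact, zero-dimensional vertex set in a metric space
  (second countability is automatic for compact metric spaces), closed edge set.\<close>
definition top_graph :: "'a::metric_space set \<Rightarrow> ('a \<times> 'a) set \<Rightarrow> bool" where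
  "top_graph V E \<longleftrightarrow> is_graph V E \<and> compact V \<and> closed E \<and>
     (\<forall>x\<in>V. \<forall>e>0. \<exists>U. openin (top_of_set V) U \<and> closedin (top_of_set V) U \<and> x \<in> U \<and> U \<subseteq> ball x e)"

text \<open>Characterization (1)-(3) of the projective Fraisse limit of G.\<close>
definition is_G_limit :: "'a::metric_space set \<Rightarrow> ('a \<times> 'a) set \<Rightarrow> bool" where
  "is_G_limit V E \<longleftrightarrow> top_graph V E \<and>
     (\<forall>A EA. fin_conn_graph A EA \<longrightarrow> (\<exists>f. confluent_epi V E A EA f)) \<and>
     (\<forall>A EA B EB f g. fin_conn_graph A EA \<and> fin_conn_graph B EB \<and>
        confluent_epi V E A EA f \<and> confluent_epi B EB A EA g \<longrightarrow>
        (\<exists>h. confluent_epi V E B EB h \<and> (\<forall>x\<in>V. f x = g (h x)))) \<and>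
     (\<forall>e>0. \<exists>A EA f. fin_conn_graph A EA \<and> confluent_epi V E A EA f \<and>
        (\<forall>y\<in>A. diameter (V \<inter> f -` {y}) < e))"

end

theory Submission
  imports Defs
begin

lemma nat_closedin: assumes "T \<subseteq> S" shows "closedin (top_of_set S) (T::nat set)"
proof -
  have "closed T" unfolding closed_def by (rule open_discrete)
  then show "closedin (top_of_set S) T" using \<open>T \<subseteq> S\<close>
    by (metis closedin_closed_Int inf.absorb_iff2)
qed

definition Bv :: "(nat \<times> nat) set \<Rightarrow> nat set" where
  "Bv EA = prod_encode ` EA"

definition Be :: "(nat \<times> nat) set \<Rightarrow> (nat \<times> nat) set" where
  "Be EA = {(prod_encode p, prod_encode q) | p q. p \<in> EA \<and> q \<in> EA \<and>
              (fst p = fst q \<or> q = (snd p, fst p))}"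

definition gB :: "nat \<Rightarrow> nat" where
  "gB n = fst (prod_decode n)"

lemma gB_enc[simp]: "gB (prod_encode p) = fst p"
  by (simp add: gB_def)

lemma Be_iff: "(prod_encode p, prod_encode q) \<in> Be EA \<longleftrightarrow>
   p \<in> EA \<and> q \<in> EA \<and> (fst p = fst q \<or> q = (snd p, fst p))"
proof
  assume "(prod_encode p, prod_encode q) \<in> Be EA"
  then show "p \<in> EA \<and> q \<in> EA \<and> (fst p = fst q \<or> q = (snd p, fst p))"
    unfolding Be_def by auto
next
  assume "p \<in> EA \<and> q \<in> EA \<and> (fst p = fst q \<or> q = (snd p, fst p))"
  then show "(prod_encode p, prod_encode q) \<in> Be EA"
    unfolding Be_def by blast
qed

lemma Be_elim:
  assumes "(x, y) \<in> Be EA"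
  obtains p q where "x = prod_encode p" "y = prod_encode q" "p \<in> EA" "q \<in> EA"
     "fst p = fst q \<or> q = (snd p, fst p)"
  using assms unfolding Be_def by auto

lemma two_step:
  assumes G: "is_graph A EA" and xy: "(x, y) \<in> Be EA" and yz: "(y, z) \<in> Be EA"
  shows "(gB x, gB z) \<in> EA"
proof -
  obtain p q where pq: "x = prod_encode p" "y = prod_encode q" "p \<in> EA" "q \<in> EA"
     "fst p = fst q \<or> q = (snd p, fst p)" using xy by (rule Be_elim)
  obtain q' r where qr: "y = prod_encode q'" "z = prod_encode r" "q' \<in> EA" "r \<in> EA"
     "fst q' = fst r \<or> r = (snd q', fst q')" using yz by (rule Be_elim)
  have "q' = q" using pq(2) qr(1) by (metis prod_encode_inverse)
  have loop: "(u, u) \<in> EA" if "(u, w) \<in> EA" for u w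
    using G that unfolding is_graph_def by blast
  have sym: "(w, u) \<in> EA" if "(u, w) \<in> EA" for u w
    using G that unfolding is_graph_def by blast
  have gx: "gB x = fst p" "gB z = fst r" using pq qr by auto
  show ?thesis
    using pq(5) qr(5)
  proof (elim disjE)
    assume "fst p = fst q" "fst q' = fst r"
    then show ?thesis using gx loop pq(3) \<open>q' = q\<close> by (metis prod.collapse)
  next
    assume "fst p = fst q" "r = (snd q', fst q')"
    then show ?thesis using gx pq(4) \<open>q' = q\<close> by (metis prod.collapse fst_conv)
  next
    assume "q = (snd p, fst p)" "fst q' = fst r"
    then show ?thesis using gx pq(3) \<open>q' = q\<close> by (metis prod.collapse fst_conv snd_conv)
  next
    assume "q = (snd p, fst p)" "r = (snd q', fst q')"
    then show ?thesis using gx loop pq(3) \<open>q' = q\<close> by (metis prod.collapse fst_conv snd_conv)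
  qed
qed

lemma fiber_edge:
  assumes "x \<in> Bv EA" "y \<in> Bv EA" "gB x = gB y"
  shows "(x, y) \<in> Be EA"
  using assms unfolding Bv_def by (auto simp: Be_iff)

lemma preimage_connected:
  assumes G: "is_graph A EA" and QA: "Q \<subseteq> A" and Qc: "graph_connected EA Q"
  shows "graph_connected (Be EA) (Bv EA \<inter> gB -` Q)"
proof -
  let ?P = "Bv EA \<inter> gB -` Q"
  have loopA: "(u, u) \<in> EA" if "u \<in> A" for u using G that unfolding is_graph_def by blast
  have symA: "(w, u) \<in> EA" if "(u, w) \<in> EA" for u w
    using G that unfolding is_graph_def by blast
  have EAsub: "EA \<subseteq> A \<times> A" using G unfolding is_graph_def by blast
  have imgP: "gB ` ?P = Q"
  proof
    show "gB ` ?P \<subseteq> Q" by auto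
    show "Q \<subseteq> gB ` ?P"
    proof
      fix u assume "u \<in> Q"
      then have "prod_encode (u, u) \<in> ?P" using QA loopA by (auto simp: Bv_def)
      then show "u \<in> gB ` ?P" by (metis gB_enc fst_conv image_eqI)
    qed
  qed
  show ?thesis
    unfolding graph_connected_def
  proof
    assume "\<exists>P1 P2. P1 \<noteq> {} \<and> P2 \<noteq> {} \<and> closedin (top_of_set ?P) P1 \<and> closedin (top_of_set ?P) P2
          \<and> P1 \<union> P2 = ?P \<and> (\<forall>a\<in>P1. \<forall>b\<in>P2. (a, b) \<notin> Be EA)"
    then obtain P1 P2 where ne: "P1 \<noteq> {}" "P2 \<noteq> {}" and un: "P1 \<union> P2 = ?P"
      and nx: "\<forall>a\<in>P1. \<forall>b\<in>P2. (a, b) \<notin> Be EA" by blast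
    have fib1: "y \<in> P1" if "x \<in> P1" "y \<in> ?P" "gB x = gB y" for x y
    proof (rule ccontr)
      assume "y \<notin> P1"
      then have "y \<in> P2" using un that by blast
      moreover have "x \<in> Bv EA" "y \<in> Bv EA" using that un by auto
      then have "(x, y) \<in> Be EA" using fiber_edge that(3) by blast
      ultimately show False using nx that by blast
    qed
    have fib2: "y \<in> P2" if "x \<in> P2" "y \<in> ?P" "gB x = gB y" for x y
    proof (rule ccontr)
      assume "y \<notin> P2"
      then have "y \<in> P1" using un that by blast
      moreover have "x \<in> Bv EA" "y \<in> Bv EA" using that un by auto
      then have "(y, x) \<in> Be EA" using fiber_edge that(3) by (metis)
      ultimately show False using nx that by blast
    qed
    define Q1 where "Q1 = gB ` P1"
    define Q2 where "Q2 = gB ` P2"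
    have "Q1 \<union> Q2 = Q" unfolding Q1_def Q2_def using imgP un by (metis image_Un)
    moreover have "Q1 \<noteq> {}" "Q2 \<noteq> {}" using ne Q1_def Q2_def by auto
    moreover have "\<forall>u\<in>Q1. \<forall>w\<in>Q2. (u, w) \<notin> EA"
    proof (intro ballI notI)
      fix u w assume u: "u \<in> Q1" and w: "w \<in> Q2" and uw: "(u, w) \<in> EA"
      obtain x where x: "x \<in> P1" "gB x = u" using u Q1_def by auto
      obtain y where y: "y \<in> P2" "gB y = w" using w Q2_def by auto
      have uQ: "u \<in> Q" "w \<in> Q" using x y un by auto
      have "prod_encode (u, w) \<in> ?P" using uw uQ by (auto simp: Bv_def)
      then have 1: "prod_encode (u, w) \<in> P1" using fib1[OF x(1)] x(2) by simp
      have "prod_encode (w, u) \<in> ?P" using uw symA uQ by (auto simp: Bv_def)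
      then have 2: "prod_encode (w, u) \<in> P2" using fib2[OF y(1)] y(2) by simp
      have "(prod_encode (u, w), prod_encode (w, u)) \<in> Be EA"
        using uw symA by (simp add: Be_iff)
      then show False using nx 1 2 by blast
    qed
    ultimately show False using Qc unfolding graph_connected_def
      by (metis nat_closedin sup_ge1 sup_ge2)
  qed
qed

lemma construction:
  assumes A: "fin_conn_graph A EA"
  shows "fin_conn_graph (Bv EA) (Be EA) \<and> confluent_epi (Bv EA) (Be EA) A EA gB"
proof -
  have G: "is_graph A EA" and fin: "finite A" and ne: "A \<noteq> {}" and Ac: "graph_connected EA A"
    using A unfolding fin_conn_graph_def by auto
  have loopA: "(u, u) \<in> EA" if "u \<in> A" for u using G that unfolding is_graph_def by blast
  have symA: "(w, u) \<in> EA" if "(u, w) \<in> EA" for u w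
    using G that unfolding is_graph_def by blast
  have EAsub: "EA \<subseteq> A \<times> A" using G unfolding is_graph_def by blast
  have BgA: "Bv EA \<inter> gB -` A = Bv EA" using EAsub by (auto simp: Bv_def)
  have gimg: "gB ` Bv EA = A"
  proof
    show "gB ` Bv EA \<subseteq> A" using EAsub by (auto simp: Bv_def)
    show "A \<subseteq> gB ` Bv EA"
    proof
      fix u assume "u \<in> A"
      then have "prod_encode (u, u) \<in> Bv EA" using loopA by (auto simp: Bv_def)
      then show "u \<in> gB ` Bv EA" by (metis gB_enc fst_conv image_eqI)
    qed
  qed
  have isg: "is_graph (Bv EA) (Be EA)"
    unfolding is_graph_def
  proof (intro conjI allI ballI impI)
    show "Be EA \<subseteq> Bv EA \<times> Bv EA" by (auto simp: Be_def Bv_def)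
    show "(x, x) \<in> Be EA" if "x \<in> Bv EA" for x using that by (auto simp: Bv_def Be_iff)
    show "(y, x) \<in> Be EA" if "(x, y) \<in> Be EA" for x y
      using that by (auto elim!: Be_elim simp: Be_iff)
  qed
  have finB: "finite (Bv EA)"
    using finite_subset[OF EAsub] fin by (simp add: Bv_def)
  have neB: "Bv EA \<noteq> {}" using gimg ne by auto
  have conB: "graph_connected (Be EA) (Bv EA)"
    using preimage_connected[OF G order.refl Ac] BgA by simp
  have epi: "graph_epi (Bv EA) (Be EA) A EA gB"
    unfolding graph_epi_def
  proof (intro conjI)
    show "continuous_on (Bv EA) gB" by simp
    show "gB ` Bv EA = A" by (rule gimg)
    show "(\<lambda>(a, b). (gB a, gB b)) ` Be EA = EA"
    proof
      show "(\<lambda>(a, b). (gB a, gB b)) ` Be EA \<subseteq> EA"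
      proof
        fix z assume "z \<in> (\<lambda>(a, b). (gB a, gB b)) ` Be EA"
        then obtain x y where z: "z = (gB x, gB y)" and xy: "(x, y) \<in> Be EA" by auto
        have "(y, y) \<in> Be EA" using xy isg unfolding is_graph_def by blast
        from two_step[OF G xy this] z show "z \<in> EA" by simp
      qed
      show "EA \<subseteq> (\<lambda>(a, b). (gB a, gB b)) ` Be EA"
      proof
        fix z assume z: "z \<in> EA"
        obtain u w where zz: "z = (u, w)" by (cases z)
        have "(prod_encode (u, w), prod_encode (w, u)) \<in> Be EA"
          using z zz symA by (simp add: Be_iff)
        then show "z \<in> (\<lambda>(a, b). (gB a, gB b)) ` Be EA" using zz
          by (force intro: image_eqI[where x="(prod_encode (u, w), prod_encode (w, u))"])
      qed
    qed
  qed
  have conf: "confluent_epi (Bv EA) (Be EA) A EA gB"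
    unfolding confluent_epi_def
  proof (intro conjI allI impI)
    show "graph_epi (Bv EA) (Be EA) A EA gB" by (rule epi)
    fix Q C assume Q: "Q \<subseteq> A \<and> graph_connected EA Q"
      and C: "graph_component (Be EA) (Bv EA \<inter> gB -` Q) C"
    have Pc: "graph_connected (Be EA) (Bv EA \<inter> gB -` Q)"
      using preimage_connected[OF G] Q by blast
    have "C = Bv EA \<inter> gB -` Q" using C Pc unfolding graph_component_def by blast
    moreover have "gB ` (Bv EA \<inter> gB -` Q) = Q"
    proof
      show "gB ` (Bv EA \<inter> gB -` Q) \<subseteq> Q" by auto
      show "Q \<subseteq> gB ` (Bv EA \<inter> gB -` Q)"
      proof
        fix u assume "u \<in> Q"
        then have "prod_encode (u, u) \<in> Bv EA \<inter> gB -` Q" using Q loopA by (auto simp: Bv_def)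
        then show "u \<in> gB ` (Bv EA \<inter> gB -` Q)" by (metis gB_enc fst_conv image_eqI)
      qed
    qed
    ultimately show "gB ` C = Q" by simp
  qed
  show ?thesis using isg finB neB conB conf unfolding fin_conn_graph_def by blast
qed

theorem mainTheorem2:
  fixes V :: "'a::metric_space set" and E :: "('a \<times> 'a) set"
  assumes "is_G_limit V E"
  shows "trans E"
proof -
  have TG: "top_graph V E" using assms unfolding is_G_limit_def by blast
  have amalg: "\<And>A EA B EB f g. fin_conn_graph A EA \<Longrightarrow> fin_conn_graph B EB \<Longrightarrow>
        confluent_epi V E A EA f \<Longrightarrow> confluent_epi B EB A EA g \<Longrightarrow>
        (\<exists>h. confluent_epi V E B EB h \<and> (\<forall>x\<in>V. f x = g (h x)))"
    using assms unfolding is_G_limit_def by blast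
  have small: "\<And>e. e > 0 \<Longrightarrow> \<exists>A EA f. fin_conn_graph A EA \<and> confluent_epi V E A EA f \<and>
        (\<forall>y\<in>A. diameter (V \<inter> f -` {y}) < e)"
    using assms unfolding is_G_limit_def by blast
  have G: "is_graph V E" and cpt: "compact V" and clE: "closed E"
    using TG unfolding top_graph_def by auto
  have EV: "E \<subseteq> V \<times> V" using G unfolding is_graph_def by blast
  show "trans E" unfolding trans_def
  proof (intro allI impI)
    fix a b c assume ab: "(a, b) \<in> E" and bc: "(b, c) \<in> E"
    have aV: "a \<in> V" and cV: "c \<in> V" using ab bc EV by auto
    show "(a, c) \<in> E"
    proof (rule ccontr)
      assume nac: "(a, c) \<notin> E"
      have "open (- E)" using clE by (simp add: open_Compl)
      then obtain U W where U: "open U" and W: "open W" and acUW: "(a, c) \<in> U \<times> W"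
          and UW: "U \<times> W \<subseteq> - E"
        using nac by (auto elim!: open_prod_elim)
      obtain r1 where r1: "r1 > 0" "ball a r1 \<subseteq> U" using U acUW openE by blast
      obtain r2 where r2: "r2 > 0" "ball c r2 \<subseteq> W" using W acUW openE by blast
      define d where "d = min r1 r2"
      have d: "d > 0" using r1 r2 d_def by simp
      obtain A EA f where A: "fin_conn_graph A EA" and f: "confluent_epi V E A EA f"
          and diam: "\<forall>y\<in>A. diameter (V \<inter> f -` {y}) < d"
        using small[OF d] by blast
      have fepi: "graph_epi V E A EA f" using f unfolding confluent_epi_def by blast
      have constr: "fin_conn_graph (Bv EA) (Be EA)" "confluent_epi (Bv EA) (Be EA) A EA gB"
        using construction[OF A] by auto
      obtain h where h: "confluent_epi V E (Bv EA) (Be EA) h" and fgh: "\<forall>x\<in>V. f x = gB (h x)"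
        using amalg[OF A constr(1) f constr(2)] by blast
      have hepi: "(\<lambda>(x, y). (h x, h y)) ` E = Be EA"
        using h unfolding confluent_epi_def graph_epi_def by blast
      have "(h a, h b) \<in> Be EA" using ab hepi by force
      moreover have "(h b, h c) \<in> Be EA" using bc hepi by force
      moreover have GA: "is_graph A EA" using A unfolding fin_conn_graph_def by blast
      ultimately have "(gB (h a), gB (h c)) \<in> EA" using two_step by blast
      then have "(f a, f c) \<in> EA" using fgh aV cV by simp
      moreover have "(\<lambda>(x, y). (f x, f y)) ` E = EA" using fepi unfolding graph_epi_def by blast
      ultimately obtain a' c' where ac': "(a', c') \<in> E" "f a' = f a" "f c' = f c" by force
      have a'V: "a' \<in> V" and c'V: "c' \<in> V" using ac' EV by auto
      have fA: "f a \<in> A" "f c \<in> A" using fepi aV cV unfolding graph_epi_def by auto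
      have bdd: "bounded (V \<inter> f -` {y})" for y
        using compact_imp_bounded[OF cpt] bounded_subset by blast
      have "dist a a' \<le> diameter (V \<inter> f -` {f a})"
        by (rule diameter_bounded_bound[OF bdd]) (use aV a'V ac' in auto)
      then have "dist a a' < r1" using diam fA d_def by fastforce
      then have "a' \<in> U" using r1 by auto
      have "dist c c' \<le> diameter (V \<inter> f -` {f c})"
        by (rule diameter_bounded_bound[OF bdd]) (use cV c'V ac' in auto)
      then have "dist c c' < r2" using diam fA d_def by fastforce
      then have "c' \<in> W" using r2 by auto
      show False using UW \<open>a' \<in> U\<close> \<open>c' \<in> W\<close> ac'(1) by blast
    qed
  qed
qed

end
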